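(* Consider a discounted Markov decision process with Borel state space $\mathcal{S}$, action sets $\mathcal{A}(s)$ for $s\in\mathcal{S}$, transition kernel $P(\cdot\mid \alpha,s)$, bounded reward function $r(\alpha,s)$, and discount factor $\beta\in(0,1)$. Fix $\tau\in(0,1)$ and a stationary policy $\pi(\cdot\mid s)$ (a probability distribution over $\mathcal{A}(s)$ for each $s$). For bounded $V:\mathcal{S}\to\mathbb{R}$ define $$(\mathcal{T}^{\tau}_{\pi}V)(s)=Q_{\tau}\big[r(\alpha,s)+\beta V(s')\,\big|\,s\big],\quad \alpha\sim\pi(\cdot\mid s),\ s'\sim P(\cdot\mid\alpha,s),$$ $$(\mathcal{T}^{\tau}_{*}V)(s)=\max_{\alpha\in\mathcal{A}(s)} Q_{\tau}\big[r(\alpha,s)+\beta V(s')\,\big|\,s\big],\quad s'\sim P(\cdot\mid\alpha,s).$$ Then for all bounded $V,W:\mathcal{S}\to\mathbb{R}$, $$\|\mathcal{T}^{\tau}_{\pi}V-\mathcal{T}^{\tau}_{\pi}W\|_\infty\le\beta\|V-W\|_\infty,\qquad \|\mathcal{T}^{\tau}_{*}V-\mathcal{T}^{\tau}_{*}W\|_\infty\le\beta\|V-W\|_\infty.$$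
   Context: For a real random variable $Z$ with CDF $F_Z$, $Q_\tau[Z]=\inf\{x\in\mathbb{R}: F_Z(x)\ge\tau\}$; $Q_\tau[\,\cdot\mid s]$ denotes the $\tau$-quantile of the conditional law given the current state $s$ (for $\mathcal{T}^\tau_\pi$ the randomness is over both the action $\alpha\sim\pi(\cdot\mid s)$ and the next state $s'$; for $\mathcal{T}^\tau_*$ the action $\alpha$ is fixed and only $s'$ is random). The operators are taken to be well defined on bounded (measurable) functions, with the maximum over $\mathcal{A}(s)$ attained. $\|f\|_\infty=\sup_{s\in\mathcal{S}}|f(s)|$. *)

theory Defs
  imports "HOL-Probability.Probability"
begin

definition quantile :: "real \<Rightarrow> real measure \<Rightarrow> real" where
  "quantile \<tau> \<mu> = Inf {x. \<tau> \<le> measure \<mu> {..x}}"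

definition step_law ::
  "('a \<Rightarrow> 's \<Rightarrow> 's measure) \<Rightarrow> ('a \<Rightarrow> 's \<Rightarrow> real) \<Rightarrow> real \<Rightarrow> ('s \<Rightarrow> real) \<Rightarrow> 's \<Rightarrow> 'a \<Rightarrow> real measure"
  where "step_law P r \<beta> V s a = distr (P a s) borel (\<lambda>s'. r a s + \<beta> * V s')"

definition T_pi ::
  "real \<Rightarrow> ('s \<Rightarrow> 'a measure) \<Rightarrow> ('a \<Rightarrow> 's \<Rightarrow> 's measure) \<Rightarrow> ('a \<Rightarrow> 's \<Rightarrow> real) \<Rightarrow> real
     \<Rightarrow> ('s \<Rightarrow> real) \<Rightarrow> 's \<Rightarrow> real"
  where "T_pi \<tau> \<pi> P r \<beta> V s = quantile \<tau> (\<pi> s \<bind> step_law P r \<beta> V s)"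

text \<open>Quantile optimality operator: max over alpha in A(s) (written as SUP; the
  maximum is assumed attained in the theorem).\<close>
definition T_star ::
  "real \<Rightarrow> ('s \<Rightarrow> 'a set) \<Rightarrow> ('a \<Rightarrow> 's \<Rightarrow> 's measure) \<Rightarrow> ('a \<Rightarrow> 's \<Rightarrow> real) \<Rightarrow> real
     \<Rightarrow> ('s \<Rightarrow> real) \<Rightarrow> 's \<Rightarrow> real"
  where "T_star \<tau> A P r \<beta> V s = (SUP a\<in>A s. quantile \<tau> (step_law P r \<beta> V s a))"

definition supnorm :: "'s measure \<Rightarrow> ('s \<Rightarrow> real) \<Rightarrow> real" where
  "supnorm M f = (SUP s\<in>space M. \<bar>f s\<bar>)"

definition bounded_fun :: "'s measure \<Rightarrow> ('s \<Rightarrow> real) \<Rightarrow> bool" where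
  "bounded_fun M f \<longleftrightarrow> (\<exists>B. \<forall>s\<in>space M. \<bar>f s\<bar> \<le> B)"

end

theory Submission
  imports Defs
begin

lemma quantile_le_shift:
  fixes \<mu> \<nu> :: "real measure"
  assumes le: "\<And>x. measure \<nu> {..x} \<le> measure \<mu> {..x + c}"
    and bdd: "bdd_below {x. \<tau> \<le> measure \<mu> {..x}}"
    and ne: "{x. \<tau> \<le> measure \<nu> {..x}} \<noteq> {}"
  shows "quantile \<tau> \<mu> \<le> quantile \<tau> \<nu> + c"
proof -
  have "Inf {x. \<tau> \<le> measure \<mu> {..x}} - c \<le> Inf {x. \<tau> \<le> measure \<nu> {..x}}"
  proof (rule cInf_greatest[OF ne])
    fix y assume "y \<in> {x. \<tau> \<le> measure \<nu> {..x}}"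
    then have "y + c \<in> {x. \<tau> \<le> measure \<mu> {..x}}" using le[of y] by auto
    then have "Inf {x. \<tau> \<le> measure \<mu> {..x}} \<le> y + c" by (rule cInf_lower[OF _ bdd])
    then show "Inf {x. \<tau> \<le> measure \<mu> {..x}} - c \<le> y" by simp
  qed
  then show ?thesis unfolding quantile_def by simp
qed

lemma quantile_bounds:
  fixes \<mu> :: "real measure"
  assumes ps: "prob_space \<mu>" and tau: "0 < \<tau>" "\<tau> \<le> 1"
    and lo: "\<And>x. x < -K \<Longrightarrow> emeasure \<mu> {..x} = 0"
    and hi: "emeasure \<mu> {..K} = 1"
  shows "bdd_below {x. \<tau> \<le> measure \<mu> {..x}}" "{x. \<tau> \<le> measure \<mu> {..x}} \<noteq> {}"
    "-K \<le> quantile \<tau> \<mu>" "quantile \<tau> \<mu> \<le> K"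
proof -
  have lo': "measure \<mu> {..x} = 0" if "x < -K" for x using lo[OF that] by (simp add: measure_def)
  have hi': "measure \<mu> {..K} = 1" using hi by (simp add: measure_def)
  have mem: "x \<ge> -K" if "\<tau> \<le> measure \<mu> {..x}" for x
    using that lo'[of x] tau by (cases "x < -K") auto
  show bb: "bdd_below {x. \<tau> \<le> measure \<mu> {..x}}" using mem by (auto intro!: bdd_belowI)
  have Kin: "K \<in> {x. \<tau> \<le> measure \<mu> {..x}}" using hi' tau by simp
  then show ne: "{x. \<tau> \<le> measure \<mu> {..x}} \<noteq> {}" by auto
  show "-K \<le> quantile \<tau> \<mu>" unfolding quantile_def using mem by (intro cInf_greatest[OF ne]) auto
  show "quantile \<tau> \<mu> \<le> K" unfolding quantile_def by (rule cInf_lower[OF Kin bb])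
qed

lemma measure_le_from_emeasure:
  assumes "prob_space \<mu>" "prob_space \<nu>" "emeasure \<nu> A \<le> emeasure \<mu> B"
  shows "measure \<nu> A \<le> measure \<mu> B"
proof -
  have "emeasure \<mu> B \<noteq> \<top>" using assms(1) using prob_space.emeasure_le_1[OF assms(1), of B] by (metis ennreal_one_less_top le_less_trans less_irrefl)
  then show ?thesis unfolding measure_def using assms(3) by (simp add: enn2real_mono top.not_eq_extremum)
qed

lemma step_kernel:
  assumes "(\<lambda>a. P a s) \<in> Act \<rightarrow>\<^sub>M prob_algebra M"
    and [measurable]: "(\<lambda>a. r a s) \<in> borel_measurable Act" and [measurable]: "U \<in> borel_measurable M"
  shows "(\<lambda>a. step_law P r \<beta> U s a) \<in> Act \<rightarrow>\<^sub>M prob_algebra borel"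
  unfolding step_law_def
  by (rule measurable_distr_prob_space2[OF assms(1)]) measurable

lemma step_emeasure:
  assumes "(\<lambda>a. P a s) \<in> Act \<rightarrow>\<^sub>M prob_algebra M" "a \<in> space Act"
    and "U \<in> borel_measurable M"
  shows "emeasure (step_law P r \<beta> U s a) {..x} = emeasure (P a s) {s'\<in>space M. r a s + \<beta> * U s' \<le> x}"
proof -
  have Pa: "P a s \<in> space (prob_algebra M)" using measurable_space[OF assms(1,2), simplified] .
  then have sp: "sets (P a s) = sets M" "prob_space (P a s)" by (auto simp: space_prob_algebra)
  have ssp: "space (P a s) = space M" by (rule sets_eq_imp_space_eq[OF sp(1)])
  have m: "(\<lambda>s'. r a s + \<beta> * U s') \<in> borel_measurable (P a s)"
    using assms(3) by (simp add: measurable_cong_sets[OF sp(1) refl])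
  show ?thesis unfolding step_law_def
    by (subst emeasure_distr[OF m]) (auto simp: ssp intro!: arg_cong[where f="emeasure (P a s)"])
qed
lemma q_cmp:
  fixes \<mu> \<nu> :: "real measure"
  assumes "prob_space \<mu>" "prob_space \<nu>" "0 < \<tau>" "\<tau> \<le> 1"
    and "\<And>x. x < -K \<Longrightarrow> emeasure \<mu> {..x} = 0" "emeasure \<mu> {..K} = 1"
    and "\<And>x. x < -K \<Longrightarrow> emeasure \<nu> {..x} = 0" "emeasure \<nu> {..K} = 1"
    and le: "\<And>x. emeasure \<nu> {..x} \<le> emeasure \<mu> {..x + c}"
  shows "quantile \<tau> \<mu> \<le> quantile \<tau> \<nu> + c"
proof (rule quantile_le_shift)
  show "measure \<nu> {..x} \<le> measure \<mu> {..x + c}" for x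
    by (rule measure_le_from_emeasure[OF assms(1,2) le])
  show "bdd_below {x. \<tau> \<le> measure \<mu> {..x}}" by (rule quantile_bounds(1)[OF assms(1,3,4,5,6)])
  show "{x. \<tau> \<le> measure \<nu> {..x}} \<noteq> {}" by (rule quantile_bounds(2)[OF assms(2,3,4,7,8)])
qed

lemma step_ps:
  assumes "(\<lambda>a. P a s) \<in> Act \<rightarrow>\<^sub>M prob_algebra M" "(\<lambda>a. r a s) \<in> borel_measurable Act"
    "U \<in> borel_measurable M" "a \<in> space Act"
  shows "prob_space (step_law P r \<beta> U s a)"
  using measurable_space[OF step_kernel[where P=P and s=s and r=r and U=U and \<beta>=\<beta>, OF assms(1-3)] assms(4)] by (simp add: space_prob_algebra)

lemma P_facts:
  assumes "(\<lambda>a. P a s) \<in> Act \<rightarrow>\<^sub>M prob_algebra M" "a \<in> space Act"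
  shows "sets (P a s) = sets M" "prob_space (P a s)" "space (P a s) = space M"
proof -
  have Pa: "P a s \<in> space (prob_algebra M)" using measurable_space[OF assms(1,2), simplified] .
  then show sp: "sets (P a s) = sets M" "prob_space (P a s)" by (auto simp: space_prob_algebra)
  show "space (P a s) = space M" by (rule sets_eq_imp_space_eq[OF sp(1)])
qed

lemma step_bnds:
  assumes ker: "(\<lambda>a. P a s) \<in> Act \<rightarrow>\<^sub>M prob_algebra M" and a: "a \<in> space Act"
    and [measurable]: "U \<in> borel_measurable M"
    and K: "\<And>s'. s' \<in> space M \<Longrightarrow> \<bar>r a s + \<beta> * U s'\<bar> \<le> K"
  shows "x < -K \<Longrightarrow> emeasure (step_law P r \<beta> U s a) {..x} = 0"
    "emeasure (step_law P r \<beta> U s a) {..K} = 1"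
proof -
  note pf = P_facts[where P=P and s=s, OF ker a]
  show "x < -K \<Longrightarrow> emeasure (step_law P r \<beta> U s a) {..x} = 0"
  proof -
    assume x: "x < -K"
    have e: "{s'\<in>space M. r a s + \<beta> * U s' \<le> x} = {}" using K x by force
    show ?thesis unfolding step_emeasure[where P=P and s=s, OF ker a \<open>U \<in> borel_measurable M\<close>] e by simp
  qed
  have "{s'\<in>space M. r a s + \<beta> * U s' \<le> K} = space (P a s)" using K pf(3) by force
  then show "emeasure (step_law P r \<beta> U s a) {..K} = 1"
    by (simp add: step_emeasure[where P=P and s=s, OF ker a] prob_space.emeasure_space_1[OF pf(2)])
qed

lemma step_cmp:
  assumes ker: "(\<lambda>a. P a s) \<in> Act \<rightarrow>\<^sub>M prob_algebra M" and a: "a \<in> space Act"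
    and [measurable]: "U1 \<in> borel_measurable M" "U2 \<in> borel_measurable M"
    and le: "\<And>s'. s' \<in> space M \<Longrightarrow> U1 s' \<le> U2 s' + D" and b: "0 \<le> \<beta>"
  shows "emeasure (step_law P r \<beta> U2 s a) {..x} \<le> emeasure (step_law P r \<beta> U1 s a) {..x + \<beta> * D}"
proof -
  note pf = P_facts[where P=P and s=s, OF ker a]
  have sub: "{s'\<in>space M. r a s + \<beta> * U2 s' \<le> x} \<subseteq> {s'\<in>space M. r a s + \<beta> * U1 s' \<le> x + \<beta> * D}"
  proof safe
    fix s' assume "s' \<in> space M" "r a s + \<beta> * U2 s' \<le> x"
    moreover have "\<beta> * U1 s' \<le> \<beta> * U2 s' + \<beta> * D"
      using mult_left_mono[OF le[OF \<open>s' \<in> space M\<close>] b] by (simp add: distrib_left)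
    ultimately show "r a s + \<beta> * U1 s' \<le> x + \<beta> * D" by simp
  qed
  have "{s'\<in>space M. r a s + \<beta> * U1 s' \<le> x + \<beta> * D} \<in> sets (P a s)"
    unfolding pf(1) by measurable
  then show ?thesis
    by (simp add: step_emeasure[where P=P and s=s, OF ker a] emeasure_mono[OF sub])
qed


lemma bind_facts:
  assumes ker: "(\<lambda>a. P a s) \<in> Act \<rightarrow>\<^sub>M prob_algebra M" and rm: "(\<lambda>a. r a s) \<in> borel_measurable Act"
    and Um: "U \<in> borel_measurable M" and pis: "\<pi> \<in> space (prob_algebra Act)"
    and K: "\<And>a s'. a \<in> space Act \<Longrightarrow> s' \<in> space M \<Longrightarrow> \<bar>r a s + \<beta> * U s'\<bar> \<le> K"
  shows "prob_space (\<pi> \<bind> step_law P r \<beta> U s)"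
    "x < -K \<Longrightarrow> emeasure (\<pi> \<bind> step_law P r \<beta> U s) {..x} = 0"
    "emeasure (\<pi> \<bind> step_law P r \<beta> U s) {..K} = 1"
proof -
  note kern = step_kernel[where P=P and s=s and r=r and U=U and \<beta>=\<beta>, OF ker rm Um]
  show "prob_space (\<pi> \<bind> step_law P r \<beta> U s)" by (rule prob_space_bind'[OF pis kern])
  have pp: "prob_space \<pi>" "sets \<pi> = sets Act" using pis by (auto simp: space_prob_algebra)
  have sp: "space \<pi> = space Act" by (rule sets_eq_imp_space_eq[OF pp(2)])
  note eb = emeasure_bind_prob_algebra[OF pis kern]
  show "x < -K \<Longrightarrow> emeasure (\<pi> \<bind> step_law P r \<beta> U s) {..x} = 0"
  proof -
    assume x: "x < -K"
    have "emeasure (\<pi> \<bind> step_law P r \<beta> U s) {..x} = (\<integral>\<^sup>+a. emeasure (step_law P r \<beta> U s a) {..x} \<partial>\<pi>)"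
      by (rule eb) simp
    also have "\<dots> = (\<integral>\<^sup>+a. 0 \<partial>\<pi>)"
      by (rule nn_integral_cong) (use step_bnds(1)[where P=P and s=s and r=r and \<beta>=\<beta> and K=K, OF ker _ Um K x] sp in auto)
    finally show ?thesis by simp
  qed
  have "emeasure (\<pi> \<bind> step_law P r \<beta> U s) {..K} = (\<integral>\<^sup>+a. emeasure (step_law P r \<beta> U s a) {..K} \<partial>\<pi>)"
    by (rule eb) simp
  also have "\<dots> = (\<integral>\<^sup>+a. 1 \<partial>\<pi>)"
    by (rule nn_integral_cong) (use step_bnds(2)[where P=P and s=s and r=r and \<beta>=\<beta> and K=K, OF ker _ Um K] sp in auto)
  also have "\<dots> = 1" using prob_space.emeasure_space_1[OF pp(1)] by simp
  finally show "emeasure (\<pi> \<bind> step_law P r \<beta> U s) {..K} = 1" .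
qed

lemma bind_cmp:
  assumes ker: "(\<lambda>a. P a s) \<in> Act \<rightarrow>\<^sub>M prob_algebra M" and rm: "(\<lambda>a. r a s) \<in> borel_measurable Act"
    and U1m: "U1 \<in> borel_measurable M" and U2m: "U2 \<in> borel_measurable M"
    and pis: "\<pi> \<in> space (prob_algebra Act)"
    and le: "\<And>s'. s' \<in> space M \<Longrightarrow> U1 s' \<le> U2 s' + D" and b: "0 \<le> \<beta>"
  shows "emeasure (\<pi> \<bind> step_law P r \<beta> U2 s) {..x} \<le> emeasure (\<pi> \<bind> step_law P r \<beta> U1 s) {..x + \<beta> * D}"
proof -
  note k1 = step_kernel[where P=P and s=s and r=r and U=U1 and \<beta>=\<beta>, OF ker rm U1m]
  note k2 = step_kernel[where P=P and s=s and r=r and U=U2 and \<beta>=\<beta>, OF ker rm U2m]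
  have pp: "sets \<pi> = sets Act" using pis by (auto simp: space_prob_algebra)
  have sp: "space \<pi> = space Act" by (rule sets_eq_imp_space_eq[OF pp])
  have "emeasure (\<pi> \<bind> step_law P r \<beta> U2 s) {..x} = (\<integral>\<^sup>+a. emeasure (step_law P r \<beta> U2 s a) {..x} \<partial>\<pi>)"
    by (rule emeasure_bind_prob_algebra[OF pis k2]) simp
  also have "\<dots> \<le> (\<integral>\<^sup>+a. emeasure (step_law P r \<beta> U1 s a) {..x + \<beta> * D} \<partial>\<pi>)"
    by (rule nn_integral_mono) (use step_cmp[where P=P and s=s, OF ker _ U1m U2m le b] sp in auto)
  also have "\<dots> = emeasure (\<pi> \<bind> step_law P r \<beta> U1 s) {..x + \<beta> * D}"
    by (rule emeasure_bind_prob_algebra[OF pis k1, symmetric]) simp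
  finally show ?thesis .
qed


lemma step_q_cmp:
  assumes ker: "(\<lambda>a. P a s) \<in> Act \<rightarrow>\<^sub>M prob_algebra M" and rm: "(\<lambda>a. r a s) \<in> borel_measurable Act"
    and U1m: "U1 \<in> borel_measurable M" and U2m: "U2 \<in> borel_measurable M" and a: "a \<in> space Act"
    and K1: "\<And>s'. s' \<in> space M \<Longrightarrow> \<bar>r a s + \<beta> * U1 s'\<bar> \<le> K"
    and K2: "\<And>s'. s' \<in> space M \<Longrightarrow> \<bar>r a s + \<beta> * U2 s'\<bar> \<le> K"
    and le: "\<And>s'. s' \<in> space M \<Longrightarrow> U1 s' \<le> U2 s' + D" and b: "0 \<le> \<beta>"
    and tau: "0 < \<tau>" "\<tau> \<le> 1"
  shows "quantile \<tau> (step_law P r \<beta> U1 s a) \<le> quantile \<tau> (step_law P r \<beta> U2 s a) + \<beta> * D"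
  by (rule q_cmp[OF step_ps[where P=P and s=s and r=r and U=U1 and \<beta>=\<beta>, OF ker rm U1m a]
                    step_ps[where P=P and s=s and r=r and U=U2 and \<beta>=\<beta>, OF ker rm U2m a] tau
                    step_bnds(1)[where P=P and s=s and r=r and \<beta>=\<beta> and K=K, OF ker a U1m K1]
                    step_bnds(2)[where P=P and s=s and r=r and \<beta>=\<beta> and K=K, OF ker a U1m K1]
                    step_bnds(1)[where P=P and s=s and r=r and \<beta>=\<beta> and K=K, OF ker a U2m K2]
                    step_bnds(2)[where P=P and s=s and r=r and \<beta>=\<beta> and K=K, OF ker a U2m K2]
                    step_cmp[where P=P and s=s and r=r, OF ker a U1m U2m le b]])

lemma step_q_bnd:
  assumes ker: "(\<lambda>a. P a s) \<in> Act \<rightarrow>\<^sub>M prob_algebra M" and rm: "(\<lambda>a. r a s) \<in> borel_measurable Act"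
    and Um: "U \<in> borel_measurable M" and a: "a \<in> space Act"
    and K: "\<And>s'. s' \<in> space M \<Longrightarrow> \<bar>r a s + \<beta> * U s'\<bar> \<le> K"
    and tau: "0 < \<tau>" "\<tau> \<le> 1"
  shows "quantile \<tau> (step_law P r \<beta> U s a) \<le> K"
  by (rule quantile_bounds(4)[OF step_ps[where P=P and s=s and r=r and U=U and \<beta>=\<beta>, OF ker rm Um a] tau
                    step_bnds(1)[where P=P and s=s and r=r and \<beta>=\<beta> and K=K, OF ker a Um K]
                    step_bnds(2)[where P=P and s=s and r=r and \<beta>=\<beta> and K=K, OF ker a Um K]])

lemma bind_q_cmp:
  assumes ker: "(\<lambda>a. P a s) \<in> Act \<rightarrow>\<^sub>M prob_algebra M" and rm: "(\<lambda>a. r a s) \<in> borel_measurable Act"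
    and U1m: "U1 \<in> borel_measurable M" and U2m: "U2 \<in> borel_measurable M"
    and pis: "\<pi> \<in> space (prob_algebra Act)"
    and K1: "\<And>a s'. a \<in> space Act \<Longrightarrow> s' \<in> space M \<Longrightarrow> \<bar>r a s + \<beta> * U1 s'\<bar> \<le> K"
    and K2: "\<And>a s'. a \<in> space Act \<Longrightarrow> s' \<in> space M \<Longrightarrow> \<bar>r a s + \<beta> * U2 s'\<bar> \<le> K"
    and le: "\<And>s'. s' \<in> space M \<Longrightarrow> U1 s' \<le> U2 s' + D" and b: "0 \<le> \<beta>"
    and tau: "0 < \<tau>" "\<tau> \<le> 1"
  shows "quantile \<tau> (\<pi> \<bind> step_law P r \<beta> U1 s) \<le> quantile \<tau> (\<pi> \<bind> step_law P r \<beta> U2 s) + \<beta> * D"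
  by (rule q_cmp[OF bind_facts(1)[where P=P and s=s and r=r and \<beta>=\<beta> and K=K, OF ker rm U1m pis K1] bind_facts(1)[where P=P and s=s and r=r and \<beta>=\<beta> and K=K, OF ker rm U2m pis K2] tau
                    bind_facts(2)[where P=P and s=s and r=r and \<beta>=\<beta> and K=K, OF ker rm U1m pis K1] bind_facts(3)[where P=P and s=s and r=r and \<beta>=\<beta> and K=K, OF ker rm U1m pis K1]
                    bind_facts(2)[where P=P and s=s and r=r and \<beta>=\<beta> and K=K, OF ker rm U2m pis K2] bind_facts(3)[where P=P and s=s and r=r and \<beta>=\<beta> and K=K, OF ker rm U2m pis K2]
                    bind_cmp[where P=P and s=s and r=r, OF ker rm U1m U2m pis le b]])

lemma sup_cmp:
  fixes f g :: "'a \<Rightarrow> real"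
  assumes A: "A \<subseteq> S" and fle: "\<And>a. a \<in> S \<Longrightarrow> f a \<le> g a + c"
    and gb: "\<And>a. a \<in> S \<Longrightarrow> g a \<le> K"
    and m: "\<exists>a\<in>A. f a = (SUP a\<in>A. f a)"
  shows "(SUP a\<in>A. f a) \<le> (SUP a\<in>A. g a) + c"
proof -
  obtain a0 where a0: "a0 \<in> A" "f a0 = (SUP a\<in>A. f a)" using m by blast
  have bdd: "bdd_above (g ` A)" using A gb by (auto intro!: bdd_aboveI)
  have "f a0 \<le> g a0 + c" using fle[of a0] a0(1) A by blast
  also have "g a0 \<le> (SUP a\<in>A. g a)" by (rule cSUP_upper[OF a0(1) bdd])
  finally show ?thesis using a0 by simp
qed

theorem theorem2:
  fixes M :: "'s measure" and Act :: "'a measure"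
    and A :: "'s \<Rightarrow> 'a set" and P :: "'a \<Rightarrow> 's \<Rightarrow> 's measure"
    and r :: "'a \<Rightarrow> 's \<Rightarrow> real" and \<beta> \<tau> :: real
    and \<pi> :: "'s \<Rightarrow> 'a measure" and V W :: "'s \<Rightarrow> real"
  assumes M_ne: "space M \<noteq> {}"
    and A_sub: "\<And>s. s \<in> space M \<Longrightarrow> A s \<subseteq> space Act"
    and A_ne: "\<And>s. s \<in> space M \<Longrightarrow> A s \<noteq> {}"
    and P_kernel: "\<And>s. s \<in> space M \<Longrightarrow> (\<lambda>a. P a s) \<in> Act \<rightarrow>\<^sub>M prob_algebra M"
    and r_meas: "\<And>s. s \<in> space M \<Longrightarrow> (\<lambda>a. r a s) \<in> borel_measurable Act"
    and r_bdd: "\<exists>B. \<forall>s\<in>space M. \<forall>a\<in>space Act. \<bar>r a s\<bar> \<le> B"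
    and beta: "0 < \<beta>" "\<beta> < 1"
    and tau: "0 < \<tau>" "\<tau> < 1"
    and pi_prob: "\<And>s. s \<in> space M \<Longrightarrow> prob_space (\<pi> s)"
    and pi_sets: "\<And>s. s \<in> space M \<Longrightarrow> sets (\<pi> s) = sets Act"
    and pi_supp: "\<And>s. s \<in> space M \<Longrightarrow> AE a in \<pi> s. a \<in> A s"
    and V_meas: "V \<in> borel_measurable M" and V_bdd: "bounded_fun M V"
    and W_meas: "W \<in> borel_measurable M" and W_bdd: "bounded_fun M W"
    and max_V: "\<And>s. s \<in> space M \<Longrightarrow> \<exists>a\<in>A s.
                  quantile \<tau> (step_law P r \<beta> V s a) = T_star \<tau> A P r \<beta> V s"
    and max_W: "\<And>s. s \<in> space M \<Longrightarrow> \<exists>a\<in>A s.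
                  quantile \<tau> (step_law P r \<beta> W s a) = T_star \<tau> A P r \<beta> W s"
  shows "supnorm M (\<lambda>s. T_pi \<tau> \<pi> P r \<beta> V s - T_pi \<tau> \<pi> P r \<beta> W s)
           \<le> \<beta> * supnorm M (\<lambda>s. V s - W s)
       \<and> supnorm M (\<lambda>s. T_star \<tau> A P r \<beta> V s - T_star \<tau> A P r \<beta> W s)
           \<le> \<beta> * supnorm M (\<lambda>s. V s - W s)"
proof -
  obtain Br where Br: "\<forall>s\<in>space M. \<forall>a\<in>space Act. \<bar>r a s\<bar> \<le> Br" using r_bdd by blast
  obtain BV where BV: "\<forall>s\<in>space M. \<bar>V s\<bar> \<le> BV" using V_bdd unfolding bounded_fun_def by blast
  obtain BW where BW: "\<forall>s\<in>space M. \<bar>W s\<bar> \<le> BW" using W_bdd unfolding bounded_fun_def by blast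
  define K where "K = Br + \<bar>BV\<bar> + \<bar>BW\<bar>"
  have bU: "\<bar>r a s + \<beta> * U s'\<bar> \<le> K"
    if "s \<in> space M" "a \<in> space Act" "s' \<in> space M" "\<bar>U s'\<bar> \<le> \<bar>BV\<bar> + \<bar>BW\<bar>" for s a s' and U :: "'s \<Rightarrow> real"
  proof -
    have "\<bar>\<beta> * U s'\<bar> \<le> \<bar>U s'\<bar>" using beta by (simp add: abs_mult mult_left_le_one_le)
    moreover have "\<bar>r a s\<bar> \<le> Br" using Br that by blast
    ultimately show ?thesis using that(4) unfolding K_def by linarith
  qed
  have KV: "\<bar>r a s + \<beta> * V s'\<bar> \<le> K" if "s \<in> space M" "a \<in> space Act" "s' \<in> space M" for s a s'
    using bU[OF that, of V] BV that(3) by fastforce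
  have KW: "\<bar>r a s + \<beta> * W s'\<bar> \<le> K" if "s \<in> space M" "a \<in> space Act" "s' \<in> space M" for s a s'
    using bU[OF that, of W] BW that(3) by fastforce
  define D where "D = supnorm M (\<lambda>s. V s - W s)"
  have bddD: "bdd_above ((\<lambda>s. \<bar>V s - W s\<bar>) ` space M)"
  proof (rule bdd_aboveI)
    fix y assume "y \<in> (\<lambda>s. \<bar>V s - W s\<bar>) ` space M"
    then obtain s where "s \<in> space M" "y = \<bar>V s - W s\<bar>" by blast
    then show "y \<le> BV + BW" using BV BW by fastforce
  qed
  have VW: "\<bar>V s - W s\<bar> \<le> D" if "s \<in> space M" for s
    unfolding D_def supnorm_def by (rule cSUP_upper[OF that bddD])
  have le1: "V s \<le> W s + D" and le2: "W s \<le> V s + D" if "s \<in> space M" for s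
    using VW[OF that] by auto
  have b0: "0 \<le> \<beta>" "\<tau> \<le> 1" using beta tau by auto
  have per: "\<bar>T_pi \<tau> \<pi> P r \<beta> V s - T_pi \<tau> \<pi> P r \<beta> W s\<bar> \<le> \<beta> * D
          \<and> \<bar>T_star \<tau> A P r \<beta> V s - T_star \<tau> A P r \<beta> W s\<bar> \<le> \<beta> * D" if s: "s \<in> space M" for s
  proof -
    note ker = P_kernel[OF s] and rm = r_meas[OF s]
    have pis: "\<pi> s \<in> space (prob_algebra Act)" using pi_prob[OF s] pi_sets[OF s] by (simp add: space_prob_algebra)
    have p1: "T_pi \<tau> \<pi> P r \<beta> V s \<le> T_pi \<tau> \<pi> P r \<beta> W s + \<beta> * D"
      unfolding T_pi_def
      by (rule bind_q_cmp[where P=P and s=s and r=r and K=K, OF ker rm V_meas W_meas pis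
            KV[OF s] KW[OF s] le1 b0(1) tau(1) b0(2)])
    have p2: "T_pi \<tau> \<pi> P r \<beta> W s \<le> T_pi \<tau> \<pi> P r \<beta> V s + \<beta> * D"
      unfolding T_pi_def
      by (rule bind_q_cmp[where P=P and s=s and r=r and K=K, OF ker rm W_meas V_meas pis
            KW[OF s] KV[OF s] le2 b0(1) tau(1) b0(2)])
    have s1: "T_star \<tau> A P r \<beta> V s \<le> T_star \<tau> A P r \<beta> W s + \<beta> * D"
      unfolding T_star_def
    proof (rule sup_cmp[where S="space Act" and K=K])
      show "A s \<subseteq> space Act" by (rule A_sub[OF s])
      show "quantile \<tau> (step_law P r \<beta> V s a) \<le> quantile \<tau> (step_law P r \<beta> W s a) + \<beta> * D"
        if "a \<in> space Act" for a
        by (rule step_q_cmp[where P=P and s=s and r=r and K=K, OF ker rm V_meas W_meas that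
            KV[OF s that] KW[OF s that] le1 b0(1) tau(1) b0(2)])
      show "quantile \<tau> (step_law P r \<beta> W s a) \<le> K" if "a \<in> space Act" for a
        by (rule step_q_bnd[where P=P and s=s and r=r and K=K, OF ker rm W_meas that
            KW[OF s that] tau(1) b0(2)])
      show "\<exists>a\<in>A s. quantile \<tau> (step_law P r \<beta> V s a) = (SUP a\<in>A s. quantile \<tau> (step_law P r \<beta> V s a))"
        using max_V[OF s] unfolding T_star_def .
    qed
    have s2: "T_star \<tau> A P r \<beta> W s \<le> T_star \<tau> A P r \<beta> V s + \<beta> * D"
      unfolding T_star_def
    proof (rule sup_cmp[where S="space Act" and K=K])
      show "A s \<subseteq> space Act" by (rule A_sub[OF s])
      show "quantile \<tau> (step_law P r \<beta> W s a) \<le> quantile \<tau> (step_law P r \<beta> V s a) + \<beta> * D"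
        if "a \<in> space Act" for a
        by (rule step_q_cmp[where P=P and s=s and r=r and K=K, OF ker rm W_meas V_meas that
            KW[OF s that] KV[OF s that] le2 b0(1) tau(1) b0(2)])
      show "quantile \<tau> (step_law P r \<beta> V s a) \<le> K" if "a \<in> space Act" for a
        by (rule step_q_bnd[where P=P and s=s and r=r and K=K, OF ker rm V_meas that
            KV[OF s that] tau(1) b0(2)])
      show "\<exists>a\<in>A s. quantile \<tau> (step_law P r \<beta> W s a) = (SUP a\<in>A s. quantile \<tau> (step_law P r \<beta> W s a))"
        using max_W[OF s] unfolding T_star_def .
    qed
    show ?thesis using p1 p2 s1 s2 by (simp add: abs_le_iff)
  qed
  have "supnorm M (\<lambda>s. T_pi \<tau> \<pi> P r \<beta> V s - T_pi \<tau> \<pi> P r \<beta> W s) \<le> \<beta> * D"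
    unfolding supnorm_def by (rule cSUP_least[OF M_ne]) (use per in blast)
  moreover have "supnorm M (\<lambda>s. T_star \<tau> A P r \<beta> V s - T_star \<tau> A P r \<beta> W s) \<le> \<beta> * D"
    unfolding supnorm_def by (rule cSUP_least[OF M_ne]) (use per in blast)
  ultimately show ?thesis unfolding D_def by blast
qed

end
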